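(* Let $g(\mu)=\mu^2$, let $T,C_1>0$, set $\mu^\ast:=\sqrt{C_1/T}$ (viewed as a constant function on $[0,T]$) and $\tau^\ast:=\sqrt{C_1T}$, and let $\Phi_h^\ast:=\nabla\Phi(\hat z(\tau^\ast))\cdot h(\hat z(\tau^\ast),p)$. If $\Phi_h^\ast>0$, then there exists $\delta>0$ such that $\Phi(z_\mu(T))\le\Phi(z_{\mu^\ast}(T))$ for every $\mu\in C([0,T],(0,\infty))$ with $\int_0^T\mu(t)^2\,\mathrm{d}t=C_1$ and $\sup_{t\in[0,T]}|\mu(t)-\mu^\ast|<\delta$, i.e. $\mu^\ast$ is a local maximizer of $\mu\mapsto\Phi(z_\mu(T))$ on this constraint set. If $\Phi_h^\ast<0$, the same holds with $\ge$ in place of $\le$ (local minimizer).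
   Context: Standing setup: $n,s\ge1$, $p\in\mathbb{R}^s$, $z_0\in\mathbb{R}^n$; $h:\mathbb{R}^n\times\mathbb{R}^s\to\mathbb{R}^n$ is continuously differentiable in its first argument and such that the autonomous initial value problem $\hat z'(\tau)=h(\hat z(\tau),p)$, $\hat z(0)=z_0$ has a unique solution $\hat z$ defined for all $\tau\in\mathbb{R}$. For $T>0$ and $\mu\in C([0,T],\mathbb{R})$, $z_\mu:[0,T]\to\mathbb{R}^n$ denotes the solution of $\dot z(t)=\mu(t)h(z(t),p)$, $z(0)=z_0$. $\Phi:\mathbb{R}^n\to\mathbb{R}$ is continuously differentiable. *)

theory Defs
  imports "HOL-Analysis.Analysis"
begin

definition C1_map :: "('a::real_normed_vector \<Rightarrow> 'b::real_normed_vector) \<Rightarrow> bool" where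
  "C1_map f \<longleftrightarrow> (\<exists>D. (\<forall>x. (f has_derivative blinfun_apply (D x)) (at x)) \<and> continuous_on UNIV D)"

definition ivp_sol :: "real \<Rightarrow> (real \<Rightarrow> real) \<Rightarrow> ('a::real_normed_vector \<Rightarrow> 'a) \<Rightarrow> 'a \<Rightarrow> (real \<Rightarrow> 'a) \<Rightarrow> bool" where
  "ivp_sol T mu F z0 z \<longleftrightarrow> z 0 = z0 \<and>
     (\<forall>t\<in>{0..T}. (z has_vector_derivative (mu t *\<^sub>R F (z t))) (at t within {0..T}))"

end

theory Submission
  imports Defs
begin


lemma C1_lipschitz:
  fixes F :: "'a::euclidean_space \<Rightarrow> 'b::real_normed_vector"
  assumes "C1_map F"
  shows "\<exists>L\<ge>0. \<forall>x\<in>cball 0 R. \<forall>y\<in>cball 0 R. norm (F x - F y) \<le> L * norm (x - y)"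
proof -
  from assms obtain D where D: "\<And>x. (F has_derivative blinfun_apply (D x)) (at x)" "continuous_on UNIV D"
    unfolding C1_map_def by blast
  have "compact (D ` cball 0 R)"
    by (intro compact_continuous_image continuous_on_subset[OF D(2)]) auto
  then obtain B where B0: "\<forall>y\<in>D ` cball 0 R. norm y \<le> B"
    using compact_imp_bounded bounded_iff by metis
  have B: "\<And>x. x \<in> cball 0 R \<Longrightarrow> norm (D x) \<le> B" using B0 by blast
  have "norm (F x - F y) \<le> max B 0 * norm (x - y)" if "x \<in> cball 0 R" "y \<in> cball 0 R" for x y
  proof (rule differentiable_bound[OF convex_cball _ _ that])
    show "(F has_derivative blinfun_apply (D x)) (at x within cball 0 R)" for x
      using D(1) has_derivative_at_withinI by blast
    show "onorm (blinfun_apply (D x)) \<le> max B 0" if "x \<in> cball 0 R" for x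
      using B[OF that] by (simp add: norm_blinfun.rep_eq[symmetric])
  qed
  then show ?thesis by (intro exI[of _ "max B 0"]) auto
qed

lemma ivp_unique:
  fixes F :: "'a::euclidean_space \<Rightarrow> 'a"
  assumes F: "C1_map F" and mu: "continuous_on {0..T} \<mu>"
    and s1: "ivp_sol T \<mu> F z0 z1" and s2: "ivp_sol T \<mu> F z0 z2"
    and t: "t \<in> {0..T}"
  shows "z1 t = z2 t"
proof -
  have d1: "\<And>t. t\<in>{0..T} \<Longrightarrow> (z1 has_vector_derivative (\<mu> t *\<^sub>R F (z1 t))) (at t within {0..T})"
    and i1: "z1 0 = z0"
    using s1 unfolding ivp_sol_def by auto
  have d2: "\<And>t. t\<in>{0..T} \<Longrightarrow> (z2 has_vector_derivative (\<mu> t *\<^sub>R F (z2 t))) (at t within {0..T})"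
    and i2: "z2 0 = z0"
    using s2 unfolding ivp_sol_def by auto
  have c1: "continuous_on {0..T} z1"
    using d1 has_vector_derivative_continuous continuous_on_eq_continuous_within by blast
  have c2: "continuous_on {0..T} z2"
    using d2 has_vector_derivative_continuous continuous_on_eq_continuous_within by blast
  obtain R1 where R1: "\<forall>x\<in>z1 ` {0..T}. norm x \<le> R1"
    using compact_continuous_image[OF c1 compact_Icc] compact_imp_bounded bounded_iff by metis
  obtain R2 where R2: "\<forall>x\<in>z2 ` {0..T}. norm x \<le> R2"
    using compact_continuous_image[OF c2 compact_Icc] compact_imp_bounded bounded_iff by metis
  obtain M where M: "\<forall>x\<in>\<mu> ` {0..T}. norm x \<le> M"
    using compact_continuous_image[OF mu compact_Icc] compact_imp_bounded bounded_iff by metis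
  define R where "R = max R1 R2"
  obtain L where L: "L \<ge> 0" "\<forall>x\<in>cball 0 R. \<forall>y\<in>cball 0 R. norm (F x - F y) \<le> L * norm (x - y)"
    using C1_lipschitz[OF F] by blast
  define M' where "M' = max M 0"
  define K where "K = 2 * M' * L"
  define u where "u = (\<lambda>t. z1 t - z2 t)"
  define f where "f = (\<lambda>t. exp (- K * t) * (u t \<bullet> u t))"
  have "f t \<le> f 0"
  proof (rule DERIV_nonpos_imp_decreasing_open[of 0 t f])
    show "0 \<le> t" using t by auto
    have sub: "{0..t} \<subseteq> {0..T}" using t by auto
    show "continuous_on {0..t} f"
      unfolding f_def u_def
      by (intro continuous_intros continuous_on_subset[OF c1 sub] continuous_on_subset[OF c2 sub])
    fix x assume x: "0 < x" "x < t"
    then have xT: "x \<in> {0..T}" using t by auto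
    have at: "at x within {0..T} = at x" using x t
      by (intro at_within_interior) auto
    let ?v = "\<mu> x *\<^sub>R (F (z1 x) - F (z2 x))"
    have du: "(u has_vector_derivative ?v) (at x)"
      using has_vector_derivative_diff[OF d1[OF xT] d2[OF xT]] at unfolding u_def
      by (simp add: scaleR_diff_right)
    have "((\<lambda>t. u t \<bullet> u t) has_derivative (\<lambda>h. u x \<bullet> (h *\<^sub>R ?v) + (h *\<^sub>R ?v) \<bullet> u x)) (at x)"
      using du unfolding has_vector_derivative_def by (intro has_derivative_inner)
    then have "((\<lambda>t. u t \<bullet> u t) has_real_derivative (2 * (u x \<bullet> ?v))) (at x)"
      unfolding has_field_derivative_def
      by (rule has_derivative_eq_rhs) (auto simp: inner_commute algebra_simps)
    then have df: "(f has_real_derivative (exp (-K*x) * (2 * (u x \<bullet> ?v) - K * (u x \<bullet> u x)))) (at x)"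
      unfolding f_def
      by (auto intro!: derivative_eq_intros simp: algebra_simps)
    have z1R: "z1 x \<in> cball 0 R" using R1 xT unfolding R_def by (auto simp: le_max_iff_disj)
    have z2R: "z2 x \<in> cball 0 R" using R2 xT unfolding R_def by (auto simp: le_max_iff_disj)
    have "u x \<bullet> ?v \<le> norm (u x) * norm ?v" by (rule norm_cauchy_schwarz)
    also have "norm ?v = \<bar>\<mu> x\<bar> * norm (F (z1 x) - F (z2 x))" by simp
    also have "\<dots> \<le> M' * (L * norm (u x))"
    proof (rule mult_mono)
      show "\<bar>\<mu> x\<bar> \<le> M'" using M xT unfolding M'_def by force
      show "norm (F (z1 x) - F (z2 x)) \<le> L * norm (u x)" using L z1R z2R unfolding u_def by blast
    qed (auto simp: M'_def)
    finally have "u x \<bullet> ?v \<le> M' * L * (u x \<bullet> u x)"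
      by (simp add: mult_left_mono power2_norm_eq_inner[symmetric] power2_eq_square mult.assoc mult.left_commute)
    then have "2 * (u x \<bullet> ?v) - K * (u x \<bullet> u x) \<le> 0" unfolding K_def by simp
    then show "\<exists>y. (f has_real_derivative y) (at x) \<and> y \<le> 0"
      using df by (intro exI[of _ "exp (-K*x) * (2 * (u x \<bullet> ?v) - K * (u x \<bullet> u x))"])
        (simp add: mult_nonneg_nonpos)
  qed
  also have "f 0 = 0" unfolding f_def u_def using i1 i2 by simp
  finally have "u t \<bullet> u t \<le> 0" unfolding f_def
    by (simp add: mult_le_0_iff)
  then have "u t = 0" by (metis antisym inner_ge_zero inner_eq_zero_iff)
  then show ?thesis unfolding u_def by simp
qed



lemma ivp_repar:
  fixes F :: "'a::euclidean_space \<Rightarrow> 'a"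
  assumes F: "C1_map F" and zh0: "zhat 0 = z0"
    and zhd: "\<forall>\<tau>. (zhat has_vector_derivative F (zhat \<tau>)) (at \<tau>)"
    and mu: "continuous_on {0..T} \<mu>" and s: "ivp_sol T \<mu> F z0 z" and T: "T \<ge> 0"
  shows "z T = zhat (integral {0..T} \<mu>)"
proof -
  define y where "y = zhat \<circ> (\<lambda>u. integral {0..u} \<mu>)"
  have "ivp_sol T \<mu> F z0 y"
    unfolding ivp_sol_def
  proof
    show "y 0 = z0" unfolding y_def using zh0 by simp
    show "\<forall>t\<in>{0..T}. (y has_vector_derivative \<mu> t *\<^sub>R F (y t)) (at t within {0..T})"
    proof
      fix t assume t: "t \<in> {0..T}"
      show "(y has_vector_derivative \<mu> t *\<^sub>R F (y t)) (at t within {0..T})"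
        using vector_diff_chain_within[OF integral_has_vector_derivative[OF mu t]
              has_vector_derivative_at_within[OF zhd[rule_format]]]
        unfolding y_def by (simp add: o_def)
    qed
  qed
  from ivp_unique[OF F mu s this] T have "z T = y T" by auto
  then show ?thesis unfolding y_def by simp
qed

lemma cs_integral:
  fixes \<mu> :: "real \<Rightarrow> real"
  assumes mu: "continuous_on {0..T} \<mu>" and T: "T > 0"
  shows "(integral {0..T} \<mu>)\<^sup>2 \<le> T * integral {0..T} (\<lambda>t. (\<mu> t)\<^sup>2)"
proof -
  define I where "I = integral {0..T} \<mu>"
  define J where "J = integral {0..T} (\<lambda>t. (\<mu> t)\<^sup>2)"
  define c where "c = I / T"
  have hI: "(\<mu> has_integral I) {0..T}"
    unfolding I_def using integrable_continuous_interval[OF mu] by (simp add: integrable_integral)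
  have hJ: "((\<lambda>t. (\<mu> t)\<^sup>2) has_integral J) {0..T}"
    unfolding J_def using integrable_continuous_interval[OF continuous_on_power[OF mu]]
    by (simp add: integrable_integral)
  have "((\<lambda>t. (\<mu> t)\<^sup>2 - 2 * c * \<mu> t + c\<^sup>2) has_integral (J - 2 * c * I + c\<^sup>2 * T)) {0..T}"
    using has_integral_add[OF has_integral_diff[OF hJ has_integral_mult_right[OF hI, of "2*c"]]
        has_integral_const_real[of "c\<^sup>2" 0 T]] T by (simp add: algebra_simps)
  moreover have "\<And>t. (\<mu> t)\<^sup>2 - 2 * c * \<mu> t + c\<^sup>2 = (\<mu> t - c)\<^sup>2" by (simp add: power2_eq_square algebra_simps)
  ultimately have "((\<lambda>t. (\<mu> t - c)\<^sup>2) has_integral (J - 2 * c * I + c\<^sup>2 * T)) {0..T}" by simp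
  then have "0 \<le> J - 2 * c * I + c\<^sup>2 * T"
    by (rule has_integral_nonneg) auto
  also have "J - 2 * c * I + c\<^sup>2 * T = J - I\<^sup>2 / T" using T unfolding c_def
    by (simp add: field_simps power2_eq_square)
  finally show ?thesis using T unfolding I_def[symmetric] J_def[symmetric]
    by (simp add: field_simps)
qed

lemma chain_deriv:
  fixes \<Phi> :: "'a::euclidean_space \<Rightarrow> real"
  assumes Phi: "C1_map \<Phi>" and zhd: "(zhat has_vector_derivative v) (at x)"
  shows "((\<lambda>\<tau>. \<Phi> (zhat \<tau>)) has_real_derivative frechet_derivative \<Phi> (at (zhat x)) v) (at x)"
proof -
  have "\<Phi> differentiable (at (zhat x))"
    using Phi unfolding C1_map_def differentiable_def by blast
  then have dP: "(\<Phi> has_derivative frechet_derivative \<Phi> (at (zhat x))) (at (zhat x))"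
    by (rule frechet_derivative_works[THEN iffD1])
  have lin: "linear (frechet_derivative \<Phi> (at (zhat x)))"
    using dP has_derivative_linear by blast
  have "((\<Phi> \<circ> zhat) has_derivative (frechet_derivative \<Phi> (at (zhat x)) \<circ> (\<lambda>s. s *\<^sub>R v))) (at x)"
    using diff_chain_at[OF zhd[unfolded has_vector_derivative_def] dP] .
  then show ?thesis unfolding has_field_derivative_def o_def
    by (rule has_derivative_eq_rhs) (auto simp: o_def linear_scale[OF lin])
qed



theorem mainTheorem8:
  fixes h :: "real^'n \<Rightarrow> real^'s \<Rightarrow> real^'n"
    and p :: "real^'s" and z0 :: "real^'n"
    and zhat :: "real \<Rightarrow> real^'n"
    and \<Phi> :: "real^'n \<Rightarrow> real"
    and T C1 :: real
  assumes h_C1: "\<forall>q. C1_map (\<lambda>z. h z q)"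
    and zhat_sol: "zhat 0 = z0" "\<forall>\<tau>. (zhat has_vector_derivative h (zhat \<tau>) p) (at \<tau>)"
    and zhat_unique: "\<forall>y. y 0 = z0 \<and> (\<forall>\<tau>. (y has_vector_derivative h (y \<tau>) p) (at \<tau>)) \<longrightarrow> y = zhat"
    and Phi_C1: "C1_map \<Phi>"
    and T_pos: "T > 0" and C1_pos: "C1 > 0"
  shows "(let mstar = sqrt (C1 / T); tstar = sqrt (C1 * T);
              Ph = frechet_derivative \<Phi> (at (zhat tstar)) (h (zhat tstar) p)
          in (Ph > 0 \<longrightarrow>
                (\<exists>\<delta>>0. \<forall>\<mu> z w.
                   continuous_on {0..T} \<mu> \<and> (\<forall>t\<in>{0..T}. \<mu> t > 0) \<and>
                   integral {0..T} (\<lambda>t. (\<mu> t)\<^sup>2) = C1 \<and>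
                   (\<forall>t\<in>{0..T}. \<bar>\<mu> t - mstar\<bar> < \<delta>) \<and>
                   ivp_sol T \<mu> (\<lambda>x. h x p) z0 z \<and>
                   ivp_sol T (\<lambda>_. mstar) (\<lambda>x. h x p) z0 w
                   \<longrightarrow> \<Phi> (z T) \<le> \<Phi> (w T))) \<and>
             (Ph < 0 \<longrightarrow>
                (\<exists>\<delta>>0. \<forall>\<mu> z w.
                   continuous_on {0..T} \<mu> \<and> (\<forall>t\<in>{0..T}. \<mu> t > 0) \<and>
                   integral {0..T} (\<lambda>t. (\<mu> t)\<^sup>2) = C1 \<and>
                   (\<forall>t\<in>{0..T}. \<bar>\<mu> t - mstar\<bar> < \<delta>) \<and>
                   ivp_sol T \<mu> (\<lambda>x. h x p) z0 z \<and>
                   ivp_sol T (\<lambda>_. mstar) (\<lambda>x. h x p) z0 w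
                   \<longrightarrow> \<Phi> (z T) \<ge> \<Phi> (w T))))"
  proof -
  define F where "F = (\<lambda>x. h x p)"
  have F: "C1_map F" using h_C1 unfolding F_def by blast
  have zhd: "\<forall>\<tau>. (zhat has_vector_derivative F (zhat \<tau>)) (at \<tau>)"
    using zhat_sol(2) unfolding F_def by blast
  define mstar where "mstar = sqrt (C1 / T)"
  define tstar where "tstar = sqrt (C1 * T)"
  define Ph where "Ph = frechet_derivative \<Phi> (at (zhat tstar)) (h (zhat tstar) p)"
  have e: "C1 / T * T\<^sup>2 = C1 * T" using T_pos by (simp add: power2_eq_square)
  have "mstar * T = sqrt (C1 / T * T\<^sup>2)" unfolding mstar_def real_sqrt_mult using T_pos by simp
  then have mT: "mstar * T = tstar" unfolding tstar_def using e by simp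
  have gd: "((\<lambda>\<tau>. \<Phi> (zhat \<tau>)) has_real_derivative Ph) (at tstar)"
    unfolding Ph_def by (rule chain_deriv[OF Phi_C1 zhat_sol(2)[rule_format]])
  have key: "\<exists>\<delta>>0. \<forall>\<mu> z w.
                   continuous_on {0..T} \<mu> \<and> (\<forall>t\<in>{0..T}. \<mu> t > 0) \<and>
                   integral {0..T} (\<lambda>t. (\<mu> t)\<^sup>2) = C1 \<and>
                   (\<forall>t\<in>{0..T}. \<bar>\<mu> t - mstar\<bar> < \<delta>) \<and>
                   ivp_sol T \<mu> (\<lambda>x. h x p) z0 z \<and>
                   ivp_sol T (\<lambda>_. mstar) (\<lambda>x. h x p) z0 w
                   \<longrightarrow> P (\<Phi> (z T)) (\<Phi> (w T))"
    if P_refl: "\<And>a. P a a"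
      and hd: "\<exists>d>0. \<forall>hh>0. hh < d \<longrightarrow> P (\<Phi> (zhat (tstar - hh))) (\<Phi> (zhat tstar))" for P
  proof -
    from hd obtain d where d: "d > 0" "\<And>hh. hh > 0 \<Longrightarrow> hh < d \<Longrightarrow> P (\<Phi> (zhat (tstar - hh))) (\<Phi> (zhat tstar))"
      by blast
    show ?thesis
    proof (intro exI[of _ "d / (2 * T)"] conjI allI impI)
      show "d / (2 * T) > 0" using d T_pos by simp
      fix \<mu> z w
      assume A: "continuous_on {0..T} \<mu> \<and> (\<forall>t\<in>{0..T}. \<mu> t > 0) \<and>
                   integral {0..T} (\<lambda>t. (\<mu> t)\<^sup>2) = C1 \<and>
                   (\<forall>t\<in>{0..T}. \<bar>\<mu> t - mstar\<bar> < d / (2 * T)) \<and>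
                   ivp_sol T \<mu> (\<lambda>x. h x p) z0 z \<and>
                   ivp_sol T (\<lambda>_. mstar) (\<lambda>x. h x p) z0 w"
      then have mu: "continuous_on {0..T} \<mu>" and int2: "integral {0..T} (\<lambda>t. (\<mu> t)\<^sup>2) = C1"
        and close: "\<And>t. t \<in> {0..T} \<Longrightarrow> \<bar>\<mu> t - mstar\<bar> < d / (2 * T)"
        and sz: "ivp_sol T \<mu> F z0 z" and sw: "ivp_sol T (\<lambda>_. mstar) F z0 w"
        unfolding F_def by auto
      define I where "I = integral {0..T} \<mu>"
      have zT: "z T = zhat I"
        unfolding I_def using ivp_repar[OF F zhat_sol(1) zhd mu sz] T_pos by simp
      have wT: "w T = zhat tstar"
        using ivp_repar[OF F zhat_sol(1) zhd continuous_on_const sw] T_pos mT by (simp add: mult.commute)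
      have "I\<^sup>2 \<le> T * C1" using cs_integral[OF mu T_pos] int2 unfolding I_def by simp
      then have "sqrt (I\<^sup>2) \<le> sqrt (C1 * T)" using real_sqrt_le_mono by (metis mult.commute)
      then have "\<bar>I\<bar> \<le> tstar" unfolding tstar_def by simp
      then have Ile: "I \<le> tstar" by (meson abs_ge_self order_trans)
      have "integral {0..T} (\<lambda>t. mstar - d / (2 * T)) \<le> I"
        unfolding I_def
        by (rule Henstock_Kurzweil_Integration.integral_le)
           (use close integrable_continuous_interval[OF mu] in \<open>force+\<close>)
      then have Ige: "tstar - d / 2 \<le> I" using T_pos mT
        by (simp add: algebra_simps)
      show "P (\<Phi> (z T)) (\<Phi> (w T))"
      proof (cases "I = tstar")
        case True then show ?thesis using zT wT P_refl by simp
      next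
        case False
        then have "tstar - I > 0" "tstar - I < d" using Ile Ige d by auto
        from d(2)[OF this] show ?thesis using zT wT by simp
      qed
    qed
  qed
  show ?thesis
    unfolding Let_def mstar_def[symmetric] tstar_def[symmetric] Ph_def[symmetric]
  proof (intro conjI impI)
    assume "Ph > 0"
    from DERIV_pos_inc_left[OF gd this] have "\<exists>d>0. \<forall>hh>0. hh < d \<longrightarrow> \<Phi> (zhat (tstar - hh)) \<le> \<Phi> (zhat tstar)"
      by (meson less_imp_le)
    from key[of "(\<le>)", OF _ this] show "\<exists>\<delta>>0. \<forall>\<mu> z w.
                   continuous_on {0..T} \<mu> \<and> (\<forall>t\<in>{0..T}. \<mu> t > 0) \<and>
                   integral {0..T} (\<lambda>t. (\<mu> t)\<^sup>2) = C1 \<and>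
                   (\<forall>t\<in>{0..T}. \<bar>\<mu> t - mstar\<bar> < \<delta>) \<and>
                   ivp_sol T \<mu> (\<lambda>x. h x p) z0 z \<and>
                   ivp_sol T (\<lambda>_. mstar) (\<lambda>x. h x p) z0 w
                   \<longrightarrow> \<Phi> (z T) \<le> \<Phi> (w T)" by simp
  next
    assume "Ph < 0"
    from DERIV_neg_dec_left[OF gd this] have "\<exists>d>0. \<forall>hh>0. hh < d \<longrightarrow> \<Phi> (zhat (tstar - hh)) \<ge> \<Phi> (zhat tstar)"
      by (meson less_imp_le)
    from key[of "(\<ge>)", OF _ this] show "\<exists>\<delta>>0. \<forall>\<mu> z w.
                   continuous_on {0..T} \<mu> \<and> (\<forall>t\<in>{0..T}. \<mu> t > 0) \<and>
                   integral {0..T} (\<lambda>t. (\<mu> t)\<^sup>2) = C1 \<and>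
                   (\<forall>t\<in>{0..T}. \<bar>\<mu> t - mstar\<bar> < \<delta>) \<and>
                   ivp_sol T \<mu> (\<lambda>x. h x p) z0 z \<and>
                   ivp_sol T (\<lambda>_. mstar) (\<lambda>x. h x p) z0 w
                   \<longrightarrow> \<Phi> (z T) \<ge> \<Phi> (w T)" by simp
  qed
qed

end
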